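(* Let $N,M\ge 1$, let $(a_\ell[i])_{i=0}^{N-1}$, $(b_\ell[i])_{i=0}^{N-1}$ for $\ell=1,\dots,M$, and $(c[i])_{i=0}^{N-1}$ be sequences of nonnegative integers, and let $W$ be the maximum of all their entries. Build an undirected graph consisting of three paths $u_0-u_1-\cdots-u_{N-1}$, $v_0-v_1-\cdots-v_{N-1}$, $w_0-w_1-\cdots-w_{N-1}$ whose edges all have weight $0$, plus nodes $x_1,\dots,x_M$, and the following additional edges: for every $i\in\{0,\dots,N-1\}$ and $\ell\in\{1,\dots,M\}$, an edge $\{u_i,x_\ell\}$ of weight $5W-a_\ell[i]$; for every $j\in\{0,\dots,N-1\}$ and $\ell$, an edge $\{x_\ell,v_j\}$ of weight $5W-b_\ell[j]$; and for every $k\in\{0,\dots,N-1\}$, an edge $\{v_0,w_k\}$ of weight $5W+c[k]$. Then the minimum total weight of a $u_0$-$w_{N-1}$ path in this graph using at most $N+2$ edges is strictly less than $15W$ if and only if there exist $i,j,k\in\{0,\dots,N-1\}$ and $\ell\in\{1,\dots,M\}$ with $i+j\le k$ and $c[k]<a_\ell[i]+b_\ell[j]$.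
   Context: The weight of a path is the sum of its edge weights; the number of edges it uses is its number of hops. *)

theory Defs
  imports Main
begin

datatype vtx = U nat | V nat | Wv nat | X nat

definition maxW :: "nat \<Rightarrow> nat \<Rightarrow> (nat \<Rightarrow> nat \<Rightarrow> nat) \<Rightarrow> (nat \<Rightarrow> nat \<Rightarrow> nat) \<Rightarrow> (nat \<Rightarrow> nat) \<Rightarrow> nat" where
  "maxW N M a b c = Max ({a l i | l i. l \<in> {1..M} \<and> i < N} \<union> {b l i | l i. l \<in> {1..M} \<and> i < N} \<union> {c i | i. i < N})"

text \<open>The weighted edges of the undirected graph, each listed once as (endpoint, endpoint, weight).\<close>
definition edges :: "nat \<Rightarrow> nat \<Rightarrow> (nat \<Rightarrow> nat \<Rightarrow> nat) \<Rightarrow> (nat \<Rightarrow> nat \<Rightarrow> nat) \<Rightarrow> (nat \<Rightarrow> nat) \<Rightarrow> (vtx \<times> vtx \<times> int) set" where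
  "edges N M a b c =
    (let W = int (maxW N M a b c) in
       {(U i, U (i+1), 0) | i. i + 1 < N}
     \<union> {(V i, V (i+1), 0) | i. i + 1 < N}
     \<union> {(Wv i, Wv (i+1), 0) | i. i + 1 < N}
     \<union> {(U i, X l, 5 * W - int (a l i)) | i l. i < N \<and> l \<in> {1..M}}
     \<union> {(X l, V j, 5 * W - int (b l j)) | j l. j < N \<and> l \<in> {1..M}}
     \<union> {(V 0, Wv k, 5 * W + int (c k)) | k. k < N})"

definition is_path :: "(vtx \<times> vtx \<times> int) set \<Rightarrow> vtx \<Rightarrow> vtx \<Rightarrow> vtx list \<Rightarrow> int list \<Rightarrow> bool" where
  "is_path E s t vs ws \<longleftrightarrow>
     vs \<noteq> [] \<and> hd vs = s \<and> last vs = t \<and> distinct vs \<and> length ws + 1 = length vs \<and>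
     (\<forall>i < length ws. (vs ! i, vs ! (i+1), ws ! i) \<in> E \<or> (vs ! (i+1), vs ! i, ws ! i) \<in> E)"

definition hop_dist :: "(vtx \<times> vtx \<times> int) set \<Rightarrow> nat \<Rightarrow> vtx \<Rightarrow> vtx \<Rightarrow> int" where
  "hop_dist E h s t = Min {sum_list ws | vs ws. is_path E s t vs ws \<and> length ws \<le> h}"

end

theory Submission imports Defs begin
fun kind :: "vtx \<Rightarrow> nat" where
 "kind (U _) = 0" | "kind (X _) = 1" | "kind (V _) = 2" | "kind (Wv _) = 3"
fun ix :: "vtx \<Rightarrow> nat" where
 "ix (U i) = i" | "ix (X i) = i" | "ix (V i) = i" | "ix (Wv i) = i"

lemma adj_kinds:
  assumes "(x,y,w) \<in> edges N M a b c \<or> (y,x,w) \<in> edges N M a b c"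
    and "W = int (maxW N M a b c)"
  shows "(kind x = kind y \<and> kind x \<noteq> 1 \<and> w = 0 \<and> ix y \<le> ix x + 1 \<and> ix x \<le> ix y + 1) \<or>
   (kind x = 0 \<and> kind y = 1 \<and> ix x < N \<and> ix y \<in> {1..M} \<and> w = 5 * W - int (a (ix y) (ix x))) \<or>
   (kind x = 1 \<and> kind y = 0 \<and> ix y < N \<and> ix x \<in> {1..M} \<and> w = 5 * W - int (a (ix x) (ix y))) \<or>
   (kind x = 1 \<and> kind y = 2 \<and> ix y < N \<and> ix x \<in> {1..M} \<and> w = 5 * W - int (b (ix x) (ix y))) \<or>
   (kind x = 2 \<and> kind y = 1 \<and> ix x < N \<and> ix y \<in> {1..M} \<and> w = 5 * W - int (b (ix y) (ix x))) \<or>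
   (x = V 0 \<and> kind y = 3 \<and> ix y < N \<and> w = 5 * W + int (c (ix y))) \<or>
   (kind x = 3 \<and> y = V 0 \<and> ix x < N \<and> w = 5 * W + int (c (ix x)))"
  using assms(1) unfolding edges_def Let_def assms(2)[symmetric]
  apply (elim disjE UnE; simp only: mem_Collect_eq prod.inject; elim exE conjE; simp)
  done

lemma maxW_bounds:
  shows "l \<in> {1..M} \<Longrightarrow> i < N \<Longrightarrow> a l i \<le> maxW N M a b c"
    and "l \<in> {1..M} \<Longrightarrow> i < N \<Longrightarrow> b l i \<le> maxW N M a b c"
    and "i < N \<Longrightarrow> c i \<le> maxW N M a b c"
proof -
  have f1: "finite {a l i | l i. l \<in> {1..M} \<and> i < N}" by (rule finite_image_set2) auto
  have f2: "finite {b l i | l i. l \<in> {1..M} \<and> i < N}" by (rule finite_image_set2) auto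
  have f3: "finite {c i | i. i < N}" by (rule finite_image_set) auto
  show "l \<in> {1..M} \<Longrightarrow> i < N \<Longrightarrow> a l i \<le> maxW N M a b c"
    unfolding maxW_def by (rule Max_ge) (use f1 f2 f3 in auto)
  show "l \<in> {1..M} \<Longrightarrow> i < N \<Longrightarrow> b l i \<le> maxW N M a b c"
    unfolding maxW_def by (rule Max_ge) (use f1 f2 f3 in auto)
  show "i < N \<Longrightarrow> c i \<le> maxW N M a b c"
    unfolding maxW_def by (rule Max_ge) (use f1 f2 f3 in auto)
qed

lemma adj_w:
  assumes "(x,y,w) \<in> edges N M a b c \<or> (y,x,w) \<in> edges N M a b c"
    and "W = int (maxW N M a b c)"
  shows "0 \<le> w \<and> w \<le> 6 * W" and "kind x = 1 \<or> kind y = 1 \<Longrightarrow> 4 * W \<le> w"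
proof -
  note K = adj_kinds[OF assms]
  have B: "\<And>l i. l \<in> {1..M} \<Longrightarrow> i < N \<Longrightarrow> int (a l i) \<le> W \<and> int (b l i) \<le> W"
          "\<And>i. i < N \<Longrightarrow> int (c i) \<le> W"
    using maxW_bounds assms(2) by fastforce+
  note BB = B(1)[of "ix x" "ix y"] B(1)[of "ix y" "ix x"] B(2)[of "ix x"] B(2)[of "ix y"]
  show "0 \<le> w \<and> w \<le> 6 * W" using K BB assms(2) by auto
  show "kind x = 1 \<or> kind y = 1 \<Longrightarrow> 4 * W \<le> w" using K BB assms(2) by auto
qed

lemma hop_up: "(\<And>t. m0 \<le> t \<Longrightarrow> t < m1 \<Longrightarrow> g (Suc t) \<le> g t + 1) \<Longrightarrow> m0 \<le> m1 \<Longrightarrow> (g m1::nat) \<le> g m0 + (m1 - m0)"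
proof (induction m1)
  case 0 then show ?case by simp
next
  case (Suc m) show ?case
  proof (cases "m0 \<le> m")
    case True
    then have "g m \<le> g m0 + (m - m0)" using Suc by auto
    moreover have "g (Suc m) \<le> g m + 1" using Suc True by auto
    ultimately show ?thesis using True by linarith
  next
    case False then show ?thesis using Suc by (simp add: le_Suc_eq)
  qed
qed

lemma hop_down: "(\<And>t. m0 \<le> t \<Longrightarrow> t < m1 \<Longrightarrow> g t \<le> g (Suc t) + 1) \<Longrightarrow> m0 \<le> m1 \<Longrightarrow> (g m0::nat) \<le> g m1 + (m1 - m0)"
proof (induction m1)
  case 0 then show ?case by simp
next
  case (Suc m) show ?case
  proof (cases "m0 \<le> m")
    case True
    then have "g m0 \<le> g m + (m - m0)" using Suc by auto
    moreover have "g m \<le> g (Suc m) + 1" using Suc True by auto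
    ultimately show ?thesis using True by linarith
  next
    case False then show ?thesis using Suc by (simp add: le_Suc_eq)
  qed
qed

lemma kind_cases: "kind x = 0 \<Longrightarrow> x = U (ix x)" "kind x = 1 \<Longrightarrow> x = X (ix x)"
  "kind x = 2 \<Longrightarrow> x = V (ix x)" "kind x = 3 \<Longrightarrow> x = Wv (ix x)" "kind x \<le> 3"
  by (cases x; simp)+

lemma sum_ge:
  assumes "\<And>t. t < length ws \<Longrightarrow> 0 \<le> ws ! t" "T \<subseteq> {0..<length ws}"
  shows "sum ((!) ws) T \<le> (sum_list ws :: int)"
  unfolding sum_list_sum_nth by (rule sum_mono2) (use assms in auto)

lemma forward:
  assumes P: "is_path (edges N M a b c) (U 0) (Wv (N-1)) vs ws"
    and len: "length ws \<le> N+2"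
    and S: "sum_list ws < 15 * int (maxW N M a b c)"
  shows "\<exists>i j k l. i < N \<and> j < N \<and> k < N \<and> l \<in> {1..M} \<and> i + j \<le> k \<and> c k < a l i + b l j"
proof -
  define W where "W = int (maxW N M a b c)"
  define E where "E = edges N M a b c"
  define n where "n = length ws"
  have lvs: "length vs = n + 1" using P by (simp add: is_path_def n_def)
  have v0: "vs!0 = U 0" using P by (auto simp add: is_path_def hd_conv_nth)
  have vn: "vs!n = Wv (N-1)" using P lvs by (auto simp add: is_path_def last_conv_nth)
  have dist: "distinct vs" using P is_path_def by simp
  have adj: "(vs!t, vs!(t+1), ws!t) \<in> E \<or> (vs!(t+1), vs!t, ws!t) \<in> E" if "t < n" for t
    using P that by (simp add: is_path_def n_def E_def)
  note K = adj_kinds[OF adj[unfolded E_def] W_def]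
  have wpos: "0 \<le> ws!t" if "t < n" for t using adj_w(1)[OF adj[OF that, unfolded E_def] W_def] by simp
  have w4: "4 * W \<le> ws!t" if "t < n" "kind (vs!t) = 1 \<or> kind (vs!(t+1)) = 1" for t
    using adj_w(2)[OF adj[OF that(1), unfolded E_def] W_def] that(2) by simp
  have W0: "0 \<le> W" by (simp add: W_def)
  have sumge: "sum ((!) ws) T \<le> sum_list ws" if "T \<subseteq> {0..<n}" for T
    using sum_ge[of ws T] wpos that by (simp add: n_def)
  have deq: "i = j" if "vs!i = vs!j" "i \<le> n" "j \<le> n" for i j
    using dist that lvs nth_eq_iff_index_eq by fastforce
  have kd: "\<And>x. kind x \<le> 3" by (rule kind_cases)
  define q where "q = (LEAST t. kind (vs!t) = 3)"
  have exq: "\<exists>t. kind (vs!t) = 3" using vn by (intro exI[of _ n]) simp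
  have q3: "kind (vs!q) = 3" unfolding q_def by (rule LeastI_ex[OF exq])
  have qn: "q \<le> n" unfolding q_def by (rule Least_le) (simp add: vn)
  have qmin: "kind (vs!t) \<noteq> 3" if "t < q" for t using not_less_Least[OF that[unfolded q_def]] by simp
  have "q \<noteq> 0" using q3 v0 by (cases "q = 0") auto
  then obtain q' where qq: "q = Suc q'" by (cases q) auto
  have Kq: "vs!q' = V 0 \<and> ix (vs!q) < N \<and> ws!q' = 5 * W + int (c (ix (vs!q)))"
    using K[of q'] qn qq q3 qmin[of q'] by auto
  define k where "k = ix (vs!q)"
  have vq: "vs!q = Wv k" using q3 kind_cases(4) k_def by blast
  have kN: "k < N" and wq: "ws!q' = 5 * W + int (c k)" and vq': "vs!q' = V 0" using Kq k_def by auto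
  have tailW: "q + d \<le> n \<longrightarrow> kind (vs!(q+d)) = 3" for d
  proof (induction d)
    case 0 then show ?case using q3 by simp
  next
    case (Suc d)
    show ?case
    proof
      assume h: "q + Suc d \<le> n"
      then have k3: "kind (vs!(q+d)) = 3" using Suc by simp
      have "vs!(q+d+1) \<noteq> V 0"
      proof
        assume "vs!(q+d+1) = V 0"
        then have "q+d+1 = q'" using deq[of "q+d+1" q'] vq' h qq by simp
        then show False using qq by simp
      qed
      then show "kind (vs!(q + Suc d)) = 3" using K[of "q+d"] h k3 by auto
    qed
  qed
  have hopW: "ix (vs!n) \<le> ix (vs!q) + (n - q)"
  proof (rule hop_up[of q n "\<lambda>t. ix (vs!t)"])
    fix t assume t: "q \<le> t" "t < n"
    have "kind (vs!t) = 3" "kind (vs!(t+1)) = 3" using tailW[of "t-q"] tailW[of "t+1-q"] t by auto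
    then show "ix (vs!Suc t) \<le> ix (vs!t) + 1" using K[of t] t by auto
  qed (use qn in simp)
  then have hW: "N - 1 \<le> k + (n - q)" using vn vq by simp
  define s where "s = (LEAST t. kind (vs!t) = 2)"
  have exs: "\<exists>t. kind (vs!t) = 2" using vq' by (intro exI[of _ q']) simp
  have s2: "kind (vs!s) = 2" unfolding s_def by (rule LeastI_ex[OF exs])
  have sq: "s \<le> q'" unfolding s_def by (rule Least_le) (simp add: vq')
  have smin: "kind (vs!t) \<noteq> 2" if "t < s" for t using not_less_Least[OF that[unfolded s_def]] by simp
  have s01: "kind (vs!t) = 0 \<or> kind (vs!t) = 1" if "t < s" for t
    using smin[OF that] qmin[of t] that sq qq kd[of "vs!t"] by linarith
  have "s \<noteq> 0" using s2 v0 by (cases "s = 0") auto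
  then obtain s1 where ss1: "s = Suc s1" by (cases s) auto
  have ks1: "kind (vs!s1) = 1" using K[of s1] s01[of s1] s2 ss1 sq qq qn by auto
  have "s1 \<noteq> 0" using ks1 v0 by (cases "s1 = 0") auto
  then obtain s' where ss: "s1 = Suc s'" by (cases s1) auto
  have ks': "kind (vs!s') = 0" using K[of s'] s01[of s'] ks1 ss1 ss sq qq qn by auto
  define i where "i = ix (vs!s')"
  define l where "l = ix (vs!s1)"
  define j where "j = ix (vs!s)"
  have Ka: "i < N \<and> l \<in> {1..M} \<and> ws!s' = 5 * W - int (a l i)"
    using K[of s'] ks' ks1 ss1 ss sq qq qn by (auto simp: i_def l_def)
  have Kb: "j < N \<and> ws!s1 = 5 * W - int (b l j)"
    using K[of s1] s2 ks1 ss1 ss sq qq qn by (auto simp: j_def l_def)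
  have pre: "i \<le> s'"
  proof (cases "\<forall>t \<le> s'. kind (vs!t) = 0")
    case True
    have "ix (vs!s') \<le> ix (vs!0) + (s' - 0)"
    proof (rule hop_up[of 0 s' "\<lambda>t. ix (vs!t)"])
      fix t assume t: "0 \<le> t" "t < s'"
      have "kind (vs!t) = 0" "kind (vs!(t+1)) = 0" using True t by auto
      then show "ix (vs!Suc t) \<le> ix (vs!t) + 1" using K[of t] t ss ss1 sq qq qn by auto
    qed simp
    then show ?thesis using v0 i_def by simp
  next
    case False
    then obtain t' where t': "t' \<le> s'" "kind (vs!t') \<noteq> 0" by auto
    define t0 where "t0 = (LEAST t. kind (vs!t) \<noteq> 0)"
    have t0a: "kind (vs!t0) \<noteq> 0" unfolding t0_def by (rule LeastI[of _ t'], rule t'(2))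
    have t0b: "t0 \<le> t'" unfolding t0_def by (rule Least_le, rule t'(2))
    have t0m: "kind (vs!t) = 0" if "t < t0" for t using not_less_Least[OF that[unfolded t0_def]] by simp
    have "t0 \<noteq> 0" using t0a v0 by (cases "t0 = 0") auto
    then obtain u where u: "t0 = Suc u" by (cases t0) auto
    have "t0 \<noteq> s'" using t0a ks' by auto
    then have lt: "t0 < s'" using t0b t'(1) by simp
    have ku: "kind (vs!t0) = 1" using K[of u] t0m[of u] t0a u lt ss ss1 sq qq qn by auto
    have w1: "4 * W \<le> ws!u" using w4[of u] ku u lt ss ss1 sq qq qn by auto
    have w2: "4 * W \<le> ws!t0" using w4[of t0] ku u lt ss ss1 sq qq qn by auto
    have w3: "4 * W \<le> ws!s'" using w4[of s'] ks1 ss ss1 sq qq qn by auto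
    have w5: "4 * W \<le> ws!s1" using w4[of s1] ks1 ss ss1 sq qq qn by auto
    have "sum ((!) ws) {u, t0, s', s1, q'} \<le> sum_list ws"
      by (rule sumge) (use u lt ss ss1 sq qq qn in auto)
    moreover have "sum ((!) ws) {u, t0, s', s1, q'} = ws!u + ws!t0 + ws!s' + ws!s1 + ws!q'"
      using u lt ss ss1 sq by simp
    ultimately show ?thesis using w1 w2 w3 w5 wq W0 S W_def by simp
  qed
  have suf: "j \<le> q' - s"
  proof (cases "\<forall>t. s \<le> t \<and> t \<le> q' \<longrightarrow> kind (vs!t) = 2")
    case True
    have "ix (vs!s) \<le> ix (vs!q') + (q' - s)"
    proof (rule hop_down[of s q' "\<lambda>t. ix (vs!t)"])
      fix t assume t: "s \<le> t" "t < q'"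
      have "kind (vs!t) = 2" "kind (vs!(t+1)) = 2" using True t by auto
      then show "ix (vs!t) \<le> ix (vs!Suc t) + 1" using K[of t] t qq qn by auto
    qed (use sq in simp)
    then show ?thesis using vq' j_def by simp
  next
    case False
    then obtain t' where t': "s \<le> t'" "t' \<le> q'" "kind (vs!t') \<noteq> 2" by auto
    define t1 where "t1 = (LEAST t. s \<le> t \<and> kind (vs!t) \<noteq> 2)"
    have t1a: "s \<le> t1 \<and> kind (vs!t1) \<noteq> 2" unfolding t1_def by (rule LeastI[of _ t'], use t' in simp)
    have t1b: "t1 \<le> t'" unfolding t1_def by (rule Least_le, use t' in simp)
    have t1m: "kind (vs!t) = 2" if "s \<le> t" "t < t1" for t using not_less_Least[OF that(2)[unfolded t1_def]] that(1) by simp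
    have "t1 \<noteq> s" using t1a s2 by auto
    then obtain u where u: "t1 = Suc u" "s \<le> u" using t1a by (cases t1) auto
    have "t1 \<noteq> q'" using t1a vq' by auto
    then have lt: "t1 < q'" using t1b t'(2) by simp
    have k3: "kind (vs!t1) \<noteq> 3" using qmin[of t1] lt qq by simp
    have ku: "kind (vs!t1) = 1" using K[of u] t1m[of u] t1a k3 u lt qq qn by auto
    have w1: "4 * W \<le> ws!u" using w4[of u] ku u lt qq qn by auto
    have w2: "4 * W \<le> ws!t1" using w4[of t1] ku u lt qq qn by auto
    have w3: "4 * W \<le> ws!s'" using w4[of s'] ks1 ss ss1 sq qq qn by auto
    have w5: "4 * W \<le> ws!s1" using w4[of s1] ks1 ss ss1 sq qq qn by auto
    have "sum ((!) ws) {s', s1, u, t1, q'} \<le> sum_list ws"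
      by (rule sumge) (use u lt ss ss1 sq qq qn in auto)
    moreover have "sum ((!) ws) {s', s1, u, t1, q'} = ws!s' + ws!s1 + ws!u + ws!t1 + ws!q'"
      using u lt ss ss1 sq by simp
    ultimately show ?thesis using w1 w2 w3 w5 wq W0 S W_def by simp
  qed
  have ijk: "i + j \<le> k" using hW pre suf qq qn ss ss1 sq len kN n_def by linarith
  have "sum ((!) ws) {s', s1, q'} \<le> sum_list ws"
    by (rule sumge) (use ss ss1 sq qq qn in auto)
  moreover have "sum ((!) ws) {s', s1, q'} = ws!s' + ws!s1 + ws!q'"
    using ss ss1 sq by simp
  ultimately have "c k < a l i + b l j" using Ka Kb wq S W_def by simp
  then show ?thesis using Ka Kb kN ijk by blast
qed

lemma construct:
  assumes "i < N" "j < N" "k < N" "l \<in> {1..M}" "i + j \<le> k"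
  shows "\<exists>vs ws. is_path (edges N M a b c) (U 0) (Wv (N-1)) vs ws \<and> length ws \<le> N+2 \<and>
     sum_list ws = 15 * int (maxW N M a b c) - int (a l i) - int (b l j) + int (c k)"
proof -
  define W where "W = int (maxW N M a b c)"
  define n where "n = i + j + 3 + (N - 1 - k)"
  define f where "f t = (if t \<le> i then U t else if t = i+1 then X l else if t \<le> i+2+j then V (i+2+j-t) else Wv (t - (i+3+j) + k))" for t
  define g where "g t = (if t = i then 5*W - int (a l i) else 0) + (if t = i+1 then 5*W - int (b l j) else 0) + (if t = i+2+j then 5*W + int (c k) else 0)" for t
  have inj: "inj_on f {0..<n+1}"
    unfolding inj_on_def f_def by (auto split: if_splits)
  have adj: "(f t, f (t+1), g t) \<in> edges N M a b c \<or> (f (t+1), f t, g t) \<in> edges N M a b c" if "t < n" for t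
  proof -
    consider "t < i" | "t = i" | "t = i+1" | "i+1 < t \<and> t < i+2+j" | "t = i+2+j" | "i+2+j < t" by linarith
    then show ?thesis
    proof cases
      case 1 then show ?thesis using assms unfolding f_def g_def edges_def Let_def by auto
    next
      case 2 then show ?thesis using assms unfolding f_def g_def edges_def Let_def W_def by auto
    next
      case 3 then show ?thesis using assms unfolding f_def g_def edges_def Let_def W_def by auto
    next
      case 4
      then have "f t = V (Suc (i+1+j-t))" "f (t+1) = V (i+1+j-t)" unfolding f_def by auto
      moreover have "g t = 0" using 4 unfolding g_def by auto
      moreover have "Suc (i+1+j-t) < N" using 4 assms by linarith
      ultimately show ?thesis unfolding edges_def Let_def by auto
    next
      case 5 then show ?thesis using assms unfolding f_def g_def edges_def Let_def W_def by auto
    next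
      case 6
      then have "f t = Wv (t - (i+3+j) + k)" "f (t+1) = Wv (Suc (t - (i+3+j) + k))" unfolding f_def by auto
      moreover have "g t = 0" using 6 unfolding g_def by auto
      moreover have "Suc (t - (i+3+j) + k) < N" using 6 that assms n_def by linarith
      ultimately show ?thesis unfolding edges_def Let_def by auto
    qed
  qed
  have fn: "f n = Wv (N - 1)" unfolding f_def n_def using assms by auto
  have P: "is_path (edges N M a b c) (U 0) (Wv (N-1)) (map f [0..<n+1]) (map g [0..<n])"
    unfolding is_path_def using inj adj fn
    by (auto simp: distinct_map hd_map last_map f_def nth_append simp del: upt_Suc)
  have "sum_list (map g [0..<n]) = sum g {0..<n}"
    by (simp add: sum_list_distinct_conv_sum_set)
  also have "\<dots> = (5*W - int (a l i)) + (5*W - int (b l j)) + (5*W + int (c k))"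
    unfolding g_def sum.distrib using n_def by (simp add: sum.delta)
  finally have "sum_list (map g [0..<n]) = 15 * W - int (a l i) - int (b l j) + int (c k)" by simp
  moreover have "length (map g [0..<n]) \<le> N + 2" using n_def assms by simp
  ultimately show ?thesis using P W_def by blast
qed

theorem mainTheorem8:
  fixes N M :: nat and a b :: "nat \<Rightarrow> nat \<Rightarrow> nat" and c :: "nat \<Rightarrow> nat"
  assumes "N \<ge> 1" and "M \<ge> 1"
  shows "hop_dist (edges N M a b c) (N + 2) (U 0) (Wv (N - 1)) < 15 * int (maxW N M a b c)
     \<longleftrightarrow> (\<exists>i j k l. i < N \<and> j < N \<and> k < N \<and> l \<in> {1..M} \<and> i + j \<le> k \<and> c k < a l i + b l j)"
proof -
  define W where "W = int (maxW N M a b c)"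
  define S where "S = {sum_list ws | vs ws. is_path (edges N M a b c) (U 0) (Wv (N-1)) vs ws \<and> length ws \<le> N+2}"
  have hd: "hop_dist (edges N M a b c) (N + 2) (U 0) (Wv (N - 1)) = Min S"
    by (simp add: hop_dist_def S_def)
  have fin: "finite S"
  proof (rule finite_subset)
    show "S \<subseteq> sum_list ` {ws. set ws \<subseteq> {0..6*W} \<and> length ws \<le> N+2}"
    proof
      fix x assume "x \<in> S"
      then obtain vs ws where p: "is_path (edges N M a b c) (U 0) (Wv (N-1)) vs ws" "length ws \<le> N+2" "x = sum_list ws"
        unfolding S_def by blast
      have "set ws \<subseteq> {0..6*W}"
      proof
        fix w assume "w \<in> set ws"
        then obtain t where t: "t < length ws" "w = ws!t" by (auto simp: in_set_conv_nth)
        have "(vs!t, vs!(t+1), ws!t) \<in> edges N M a b c \<or> (vs!(t+1), vs!t, ws!t) \<in> edges N M a b c"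
          using p(1) t unfolding is_path_def by blast
        from adj_w(1)[OF this W_def] t show "w \<in> {0..6*W}" by simp
      qed
      then show "x \<in> sum_list ` {ws. set ws \<subseteq> {0..6*W} \<and> length ws \<le> N+2}" using p by blast
    qed
    show "finite (sum_list ` {ws. set ws \<subseteq> {0..6*W} \<and> length ws \<le> N+2})"
      by (intro finite_imageI finite_lists_length_le) simp
  qed
  have ne: "S \<noteq> {}"
  proof -
    obtain vs ws where "is_path (edges N M a b c) (U 0) (Wv (N-1)) vs ws" "length ws \<le> N+2"
      using construct[of 0 N 0 "N-1" 1 M a b c] assms by auto
    then show ?thesis unfolding S_def by blast
  qed
  show ?thesis
  proof
    assume "hop_dist (edges N M a b c) (N + 2) (U 0) (Wv (N - 1)) < 15 * int (maxW N M a b c)"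
    then have "Min S < 15 * int (maxW N M a b c)" using hd by simp
    moreover have "Min S \<in> S" using fin ne by (rule Min_in)
    ultimately obtain vs ws where "is_path (edges N M a b c) (U 0) (Wv (N-1)) vs ws" "length ws \<le> N+2"
        "sum_list ws < 15 * int (maxW N M a b c)" unfolding S_def by auto
    then show "\<exists>i j k l. i < N \<and> j < N \<and> k < N \<and> l \<in> {1..M} \<and> i + j \<le> k \<and> c k < a l i + b l j"
      by (rule forward)
  next
    assume "\<exists>i j k l. i < N \<and> j < N \<and> k < N \<and> l \<in> {1..M} \<and> i + j \<le> k \<and> c k < a l i + b l j"
    then obtain i j k l where h: "i < N" "j < N" "k < N" "l \<in> {1..M}" "i + j \<le> k" "c k < a l i + b l j" by blast
    obtain vs ws where p: "is_path (edges N M a b c) (U 0) (Wv (N-1)) vs ws" "length ws \<le> N+2"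
       "sum_list ws = 15 * int (maxW N M a b c) - int (a l i) - int (b l j) + int (c k)"
      using construct[OF h(1-5)] by blast
    have "sum_list ws \<in> S" unfolding S_def using p by blast
    then have "Min S \<le> sum_list ws" using fin by (rule Min_le[rotated])
    then show "hop_dist (edges N M a b c) (N + 2) (U 0) (Wv (N - 1)) < 15 * int (maxW N M a b c)"
      using hd p(3) h(6) by simp
  qed
qed

end
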